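(* Let $m,n$ be positive integers and $\lambda,\mu,\nu$ partitions of $N$ with $\ell(\lambda)\le mn$, $\ell(\mu)\le m$, $\ell(\nu)\le n$. With $c_1=(m^2-1)(n-1)-1$, $c_2=(m-1)(n-1)^2-1$, $c_3=\binom{m-1}{2}(n-1)+(m-1)-1$, $f_1(i)=2\binom{n-1}{2}(i-2)-1$, $f_2(j)=(n-j-1)(m-1)-1$, $$\tilde g^{m,n}_{\lambda,\mu,\nu}\le\binom{N+c_1}{N}\binom{2N+c_2}{2N}\binom{(2m-1)N+c_3}{(2m-1)N}\prod_{i=3}^{m}\binom{2N+f_1(i)}{2N}\prod_{j=1}^{n-3}\binom{(2m-1)N+f_2(j)}{(2m-1)N}.$$
   Context: Partitions are padded with zeros: $\lambda=(\lambda_1,\dots,\lambda_{mn})$, $\mu=(\mu_1,\dots,\mu_m)$, $\nu=(\nu_1,\dots,\nu_n)$. Vector partition function: for a $d\times r$ integer matrix $A$ with $\ker A\cap\mathbb R^r_{\ge0}=\{0\}$, $p_A(\mathbf b)=\#\{\mathbf x\in\mathbb Z^r_{\ge0}:A\mathbf x=\mathbf b\}$ for $\mathbf b\in\mathbb Z^d$. Variables $s_0,\dots,s_{m-1},t_1,\dots,t_{n-2}$; $T=t_1\cdots t_{n-2}$; $x_i=s_1\cdots s_iT^i$ ($1\le i\le m-1$), $y_j=s_0s_1\cdots s_{m-1}T^{m-1}t_1\cdots t_{j-1}$ ($1\le j\le n-1$); $e(M)\in\mathbb Z^{m+n-2}$ the exponent vector of a Laurent monomial $M$, coordinates ordered $s_0,\dots,s_{m-1},t_1,\dots,t_{n-2}$.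 $A^{m,n}$ is the matrix whose columns are the exponent vectors of the monomials (with multiplicity): $y_j/x_i$ and $x_iy_j$; $x_i$ ($n-1$ times each); $y_j$ ($m-1$ times each); $x_iy_j/x_k$ ($i\ne k$); $x_iy_j/y_k$ ($j\ne k$); $x_ky_l/(x_iy_j)$ ($i<k$, $j\ne l$); $x_k/x_i$ ($i<k$, $n-1$ times each); $y_l/y_j$ ($j<l$, $m-1$ times each); indices $i,k\in\{1,\dots,m-1\}$, $j,l\in\{1,\dots,n-1\}$. With $(z_1,\dots,z_{mn})=(1,x_1,\dots,x_{m-1},y_1,\dots,y_{n-1},x_1y_1,\dots,x_1y_{n-1},x_2y_1,\dots,x_{m-1}y_{n-1})$, $\mathbf b^{m,n}(\lambda,\mu,\nu;Id)=e\big(\prod_{i=1}^{m-1}x_i^{\mu_{i+1}}\prod_{j=1}^{n-1}y_j^{\nu_{j+1}}\big)-e\big(\prod_{i=1}^{mn}z_i^{\lambda_i}\big)$ and $\tilde g^{m,n}_{\lambda,\mu,\nu}=p_{A^{m,n}}(\mathbf b^{m,n}(\lambda,\mu,\nu;Id))$. *)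

theory Defs
  imports Main
begin

text \<open>Exponent vectors of Laurent monomials in the variables
  s_0,...,s_{m-1}, t_1,...,t_{n-2} are functions nat => int:
  coordinate k (k < m) is the exponent of s_k, coordinate m + j - 1
  (1 <= j <= n-2) is the exponent of t_j; all other coordinates are 0.\<close>

definition eT :: "nat \<Rightarrow> nat \<Rightarrow> nat \<Rightarrow> int" where
  "eT m n c = (if m \<le> c \<and> c < m + (n - 2) then 1 else 0)"

text \<open>e(x_i), x_i = s_1 ... s_i T^i\<close>
definition ex :: "nat \<Rightarrow> nat \<Rightarrow> nat \<Rightarrow> nat \<Rightarrow> int" where
  "ex m n i c = (if 1 \<le> c \<and> c \<le> i then 1 else 0) + int i * eT m n c"

text \<open>e(y_j), y_j = s_0 s_1 ... s_{m-1} T^{m-1} t_1 ... t_{j-1}\<close>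
definition ey :: "nat \<Rightarrow> nat \<Rightarrow> nat \<Rightarrow> nat \<Rightarrow> int" where
  "ey m n j c = (if c < m then 1 else 0) + int (m - 1) * eT m n c
               + (if m \<le> c \<and> c < m + (j - 1) then 1 else 0)"

definition colsA :: "nat \<Rightarrow> nat \<Rightarrow> (nat \<Rightarrow> int) list" where
  "colsA m n =
     [(\<lambda>c. ey m n j c - ex m n i c). i \<leftarrow> [1..<m], j \<leftarrow> [1..<n]]
   @ [(\<lambda>c. ex m n i c + ey m n j c). i \<leftarrow> [1..<m], j \<leftarrow> [1..<n]]
   @ concat [replicate (n - 1) (ex m n i). i \<leftarrow> [1..<m]]
   @ concat [replicate (m - 1) (ey m n j). j \<leftarrow> [1..<n]]
   @ [(\<lambda>c. ex m n i c + ey m n j c - ex m n k c).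
        i \<leftarrow> [1..<m], k \<leftarrow> [1..<m], i \<noteq> k, j \<leftarrow> [1..<n]]
   @ [(\<lambda>c. ex m n i c + ey m n j c - ey m n k c).
        i \<leftarrow> [1..<m], j \<leftarrow> [1..<n], k \<leftarrow> [1..<n], j \<noteq> k]
   @ [(\<lambda>c. ex m n k c + ey m n l c - ex m n i c - ey m n j c).
        i \<leftarrow> [1..<m], k \<leftarrow> [1..<m], i < k, j \<leftarrow> [1..<n], l \<leftarrow> [1..<n], j \<noteq> l]
   @ concat [replicate (n - 1) (\<lambda>c. ex m n k c - ex m n i c).
        i \<leftarrow> [1..<m], k \<leftarrow> [1..<m], i < k]
   @ concat [replicate (m - 1) (\<lambda>c. ey m n l c - ey m n j c).
        j \<leftarrow> [1..<n], l \<leftarrow> [1..<n], j < l]"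

definition vpf :: "(nat \<Rightarrow> int) list \<Rightarrow> (nat \<Rightarrow> int) \<Rightarrow> nat" where
  "vpf cols b = card {x :: nat list. length x = length cols \<and>
      (\<forall>c. (\<Sum>k<length cols. int (x ! k) * (cols ! k) c) = b c)}"

text \<open>e(z_k) for z = (1, x_1..x_{m-1}, y_1..y_{n-1}, x_1y_1,..,x_1y_{n-1}, x_2y_1, .., x_{m-1}y_{n-1})\<close>
definition ez :: "nat \<Rightarrow> nat \<Rightarrow> nat \<Rightarrow> nat \<Rightarrow> int" where
  "ez m n k c =
     (if k \<le> 1 then 0
      else if k \<le> m then ex m n (k - 1) c
      else if k \<le> m + n - 1 then ey m n (k - m) c
      else ex m n ((k - (m + n)) div (n - 1) + 1) c
         + ey m n ((k - (m + n)) mod (n - 1) + 1) c)"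

text \<open>b^{m,n}(lambda,mu,nu;Id); partitions are functions indexed from 1.\<close>
definition bvec :: "nat \<Rightarrow> nat \<Rightarrow> (nat \<Rightarrow> nat) \<Rightarrow> (nat \<Rightarrow> nat) \<Rightarrow> (nat \<Rightarrow> nat) \<Rightarrow> nat \<Rightarrow> int" where
  "bvec m n lam mu nu c =
     (\<Sum>i=1..m-1. int (mu (i + 1)) * ex m n i c)
   + (\<Sum>j=1..n-1. int (nu (j + 1)) * ey m n j c)
   - (\<Sum>k=1..m*n. int (lam k) * ez m n k c)"

definition gtilde :: "nat \<Rightarrow> nat \<Rightarrow> (nat \<Rightarrow> nat) \<Rightarrow> (nat \<Rightarrow> nat) \<Rightarrow> (nat \<Rightarrow> nat) \<Rightarrow> nat" where
  "gtilde m n lam mu nu = vpf (colsA m n) (bvec m n lam mu nu)"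

definition partition_len :: "(nat \<Rightarrow> nat) \<Rightarrow> nat \<Rightarrow> nat \<Rightarrow> bool" where
  "partition_len p N L \<longleftrightarrow>
     (\<forall>i\<ge>1. p (Suc i) \<le> p i) \<and> (\<forall>i>L. p i = 0) \<and> (\<Sum>i=1..L. p i) = N"

end

theory Submission
  imports Defs "HOL-Combinatorics.Permutations"
begin


definition lin :: "nat list \<Rightarrow> (nat \<Rightarrow> int) list \<Rightarrow> nat \<Rightarrow> int" where
  "lin x cols c = sum_list (map (\<lambda>(a,v). int a * v c) (zip x cols))"

definition Sol :: "(nat \<Rightarrow> int) list \<Rightarrow> (nat \<Rightarrow> int) \<Rightarrow> nat list set" where
  "Sol cols b = {x. length x = length cols \<and> (\<forall>c. lin x cols c = b c)}"

lemma lin_nth: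
  assumes "length x = length cols"
  shows "lin x cols c = (\<Sum>k<length cols. int (x ! k) * (cols ! k) c)"
proof -
  have "lin x cols c = (\<Sum>i = 0..<length (zip x cols). (map (\<lambda>(a,v). int a * v c) (zip x cols)) ! i)"
    unfolding lin_def by (subst sum_list_sum_nth) simp
  also have "\<dots> = (\<Sum>k<length cols. int (x ! k) * (cols ! k) c)"
    using assms by (auto simp: atLeast0LessThan intro!: sum.cong)
  finally show ?thesis .
qed

lemma vpf_Sol: "vpf cols b = card (Sol cols b)"
  unfolding vpf_def Sol_def
  by (rule arg_cong[where f=card]) (auto simp: lin_nth)

lemma sum_list_map_permute:
  fixes f :: "'a \<Rightarrow> 'b::comm_monoid_add"
  assumes "p permutes {..<length l}"
  shows "sum_list (map f (permute_list p l)) = sum_list (map f l)"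
proof -
  have "mset (map f (permute_list p l)) = mset (map f l)"
    using assms by simp
  then have "sum_mset (mset (map f (permute_list p l))) = sum_mset (mset (map f l))" by simp
  then show ?thesis by (simp only: sum_mset_sum_list)
qed

lemma perm_le:
  assumes "mset cols = mset cols'" and "finite (Sol cols' b)"
  shows "card (Sol cols b) \<le> card (Sol cols' b)"
proof -
  obtain p where p: "p permutes {..<length cols}" "permute_list p cols = cols'"
    using mset_eq_permutation[OF assms(1)[symmetric]] by blast
  have inv: "permute_list (inv p) (permute_list p x) = x" if "length x = length cols" for x :: "nat list"
  proof -
    have pi: "inv p permutes {..<length x}" using p(1) that permutes_inv by auto
    have "permute_list (p \<circ> inv p) x = permute_list (inv p) (permute_list p x)"
      by (rule permute_list_compose[OF pi])
    moreover have "p \<circ> inv p = id" using p(1) permutes_inv_o(1) by blast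
    ultimately show ?thesis by simp
  qed
  have inj: "inj_on (permute_list p) (Sol cols b)"
    by (rule inj_on_inverseI[where g="permute_list (inv p)"]) (auto simp: Sol_def inv)
  have sub: "permute_list p ` Sol cols b \<subseteq> Sol cols' b"
  proof
    fix y assume "y \<in> permute_list p ` Sol cols b"
    then obtain x where x: "x \<in> Sol cols b" "y = permute_list p x" by blast
    have lx: "length x = length cols" using x unfolding Sol_def by simp
    have pz: "p permutes {..<length (zip x cols)}" using p(1) lx by simp
    have "lin y cols' c = b c" for c
    proof -
      have "lin y cols' c = sum_list (map (\<lambda>(a,v). int a * v c) (permute_list p (zip x cols)))"
      proof -
        have "permute_list p (zip x cols) = zip (permute_list p x) (permute_list p cols)"
          by (rule permute_list_zip[OF p(1)]) (use lx in auto)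
        then show ?thesis
          unfolding lin_def x(2) p(2)[symmetric] by simp
      qed
      also have "\<dots> = lin x cols c" unfolding lin_def by (rule sum_list_map_permute[OF pz])
      finally show ?thesis using x(1) unfolding Sol_def by simp
    qed
    moreover have "length y = length cols'" using lx x(2) p(2) by auto
    ultimately show "y \<in> Sol cols' b" unfolding Sol_def by simp
  qed
  have "card (Sol cols b) = card (permute_list p ` Sol cols b)"
    using card_image[OF inj] by simp
  also have "\<dots> \<le> card (Sol cols' b)" by (rule card_mono[OF assms(2) sub])
  finally show ?thesis .
qed


definition Aset :: "nat \<Rightarrow> nat \<Rightarrow> nat list set" where
  "Aset L B = {y. length y = L \<and> sum_list y \<le> B}"

lemma fin_lists_bounded: "finite {xs :: nat list. length xs = L \<and> set xs \<subseteq> {..B}}"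
  using finite_lists_length_eq[of "{..B}" L] by (simp add: conj_commute)

lemma Aset_fin: "finite (Aset L B)"
  by (rule finite_subset[OF _ fin_lists_bounded[of L B]])
     (auto simp: Aset_def dest: member_le_sum_list[of _ "_ :: nat list"])

lemma Aset_card: "card (Aset L B) \<le> (B + L) choose B"
proof -
  let ?f = "\<lambda>y. y @ [B - sum_list y]"
  let ?T = "{l::nat list. length l = L + 1 \<and> sum_list l = B}"
  have inj: "inj_on ?f (Aset L B)"
    by (rule inj_onI) (auto simp: Aset_def)
  have sub: "?f ` Aset L B \<subseteq> ?T" by (auto simp: Aset_def)
  have finT: "finite ?T"
    by (rule finite_subset[OF _ fin_lists_bounded[of "L+1" B]])
       (auto dest: member_le_sum_list[of _ "_ :: nat list"])
  have "card (Aset L B) = card (?f ` Aset L B)" using card_image[OF inj] by simp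
  also have "\<dots> \<le> card ?T" by (rule card_mono[OF finT sub])
  also have "\<dots> = (B + L) choose B" using card_length_sum_list[of "L+1" B] by simp
  finally show ?thesis .
qed

lemma listset_iff:
  "ys \<in> listset As \<longleftrightarrow> length ys = length As \<and> (\<forall>i<length As. ys ! i \<in> As ! i)"
proof (induction As arbitrary: ys)
  case Nil then show ?case by auto
next
  case (Cons A As)
  show ?case
  proof (cases ys)
    case Nil then show ?thesis by (auto simp: set_Cons_def)
  next
    case (Cons z zs)
    have "ys \<in> listset (A # As) \<longleftrightarrow> z \<in> A \<and> zs \<in> listset As"
      using Cons by (auto simp: set_Cons_def)
    also have "\<dots> \<longleftrightarrow> length ys = length (A # As) \<and> (\<forall>i<length (A # As). ys ! i \<in> (A # As) ! i)"
      using Cons.IH[of zs] Cons by (auto simp: nth_Cons' less_Suc_eq_0_disj)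
    finally show ?thesis .
  qed
qed

lemma listset_bound:
  assumes "length Bs = length Rs"
  shows "finite (listset (map2 (\<lambda>R B. Aset (length R) B) Rs Bs)) \<and>
         card (listset (map2 (\<lambda>R B. Aset (length R) B) Rs Bs))
           \<le> prod_list (map2 (\<lambda>R B. (B + length R) choose B) Rs Bs)"
  using assms
proof (induction Rs arbitrary: Bs)
  case Nil then show ?case by simp
next
  case (Cons R Rs)
  then obtain B Bs' where Bs: "Bs = B # Bs'" "length Bs' = length Rs" by (cases Bs) auto
  let ?X = "listset (map2 (\<lambda>R B. Aset (length R) B) Rs Bs')"
  have IH: "finite ?X" "card ?X \<le> prod_list (map2 (\<lambda>R B. (B + length R) choose B) Rs Bs')"
    using Cons.IH[OF Bs(2)] by auto
  have eq: "set_Cons (Aset (length R) B) ?X = (\<lambda>(z,zs). z # zs) ` (Aset (length R) B \<times> ?X)"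
    by (auto simp: set_Cons_def)
  have fin: "finite (Aset (length R) B \<times> ?X)" using Aset_fin IH(1) by simp
  have "card (set_Cons (Aset (length R) B) ?X) \<le> card (Aset (length R) B \<times> ?X)"
    unfolding eq by (rule card_image_le[OF fin])
  also have "\<dots> = card (Aset (length R) B) * card ?X" by (simp add: card_cartesian_product)
  also have "\<dots> \<le> ((B + length R) choose B) * prod_list (map2 (\<lambda>R B. (B + length R) choose B) Rs Bs')"
    by (rule mult_le_mono[OF Aset_card IH(2)])
  finally show ?case using fin eq Bs(1) by simp
qed

lemma split_list:
  assumes "length y = sum_list (map length Rs)"
  shows "\<exists>ys. concat ys = y \<and> map length ys = map length Rs"
  using assms
proof (induction Rs arbitrary: y)
  case Nil then show ?case by simp
next
  case (Cons R Rs)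
  obtain ys where "concat ys = drop (length R) y" "map length ys = map length Rs"
    using Cons.IH[of "drop (length R) y"] Cons.prems by auto
  then show ?case using Cons.prems
    by (intro exI[of _ "take (length R) y # ys"]) auto
qed

lemma zip_concat:
  assumes "map length ys = map length Rs"
  shows "zip (concat ys) (concat Rs) = concat (map2 zip ys Rs)"
  using assms
proof (induction ys arbitrary: Rs)
  case Nil then show ?case by simp
next
  case (Cons y ys)
  then obtain R Rs' where "Rs = R # Rs'" by (cases Rs) auto
  then show ?case using Cons by simp
qed

lemma sum_swap_list:
  fixes f :: "nat \<Rightarrow> 'a \<Rightarrow> int"
  shows "(\<Sum>c\<in>C. sum_list (map (f c) l)) = sum_list (map (\<lambda>p. \<Sum>c\<in>C. f c p) l)"
  by (induction l) (auto simp: sum.distrib)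

lemma lin_functional:
  "(\<Sum>c\<in>C. lin x cols c) = sum_list (map (\<lambda>(a,v). int a * (\<Sum>c\<in>C. v c)) (zip x cols))"
  unfolding lin_def
  by (subst sum_swap_list) (simp add: case_prod_unfold sum_distrib_left)

lemma sum_list_map_concat:
  "sum_list (map f (concat L)) = sum_list (map (\<lambda>l. sum_list (map f l)) L)"
  by (induction L) auto

lemma tri_zero:
  fixes \<delta> :: "nat \<Rightarrow> int" and Ds :: "(nat \<Rightarrow> int) list"
  assumes rel: "\<And>c. (\<Sum>h<length Ds. \<delta> h * (Ds ! h) c) = 0"
    and piv: "\<And>g. g < length Ds \<Longrightarrow> (Ds ! g) (P ! g) \<noteq> 0"
    and tri: "\<And>g h. g < h \<Longrightarrow> h < length Ds \<Longrightarrow> (Ds ! h) (P ! g) = 0"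
  shows "g < length Ds \<Longrightarrow> \<delta> g = 0"
proof (induction g rule: less_induct)
  case (less g)
  have "(\<Sum>h<length Ds. \<delta> h * (Ds ! h) (P ! g)) = (\<Sum>h\<in>{g}. \<delta> h * (Ds ! h) (P ! g))"
  proof (rule sum.mono_neutral_right)
    show "\<forall>i\<in>{..<length Ds} - {g}. \<delta> i * (Ds ! i) (P ! g) = 0"
    proof
      fix i assume i: "i \<in> {..<length Ds} - {g}"
      show "\<delta> i * (Ds ! i) (P ! g) = 0"
      proof (cases "i < g")
        case True then show ?thesis using less.IH[of i] less.prems by simp
      next
        case False then have "g < i" using i by auto
        then show ?thesis using tri[of g i] i by simp
      qed
    qed
  qed (use less.prems in auto)
  then have "\<delta> g * (Ds ! g) (P ! g) = 0" using rel[of "P ! g"] by simp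
  then show ?case using piv[OF less.prems] by simp
qed

lemma core:
  fixes Ds :: "(nat \<Rightarrow> int) list" and Rs :: "(nat \<Rightarrow> int) list list"
    and P :: "nat list" and Cs :: "nat set list" and Bs :: "nat list" and b :: "nat \<Rightarrow> int"
  assumes lenB: "length Bs = length Rs" and lenC: "length Cs = length Rs"
    and nonneg: "\<And>v c. v \<in> set (Ds @ concat Rs) \<Longrightarrow> 0 \<le> v c"
    and piv: "\<And>g. g < length Ds \<Longrightarrow> (Ds ! g) (P ! g) \<noteq> 0"
    and tri: "\<And>g h. g < h \<Longrightarrow> h < length Ds \<Longrightarrow> (Ds ! h) (P ! g) = 0"
    and finC: "\<And>g. g < length Rs \<Longrightarrow> finite (Cs ! g)"
    and grp: "\<And>g v. g < length Rs \<Longrightarrow> v \<in> set (Rs ! g) \<Longrightarrow> 1 \<le> (\<Sum>c\<in>Cs ! g. v c)"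
    and bnd: "\<And>g. g < length Rs \<Longrightarrow> (\<Sum>c\<in>Cs ! g. b c) \<le> int (Bs ! g)"
  shows "finite (Sol (Ds @ concat Rs) b) \<and>
         card (Sol (Ds @ concat Rs) b) \<le> prod_list (map2 (\<lambda>R B. (B + length R) choose B) Rs Bs)"
proof -
  define cols where "cols = Ds @ concat Rs"
  define r where "r = length Ds"
  define S where "S = Sol cols b"
  define L where "L = listset (map2 (\<lambda>R B. Aset (length R) B) Rs Bs)"
  define T where "T = concat ` L"
  have LB: "finite L" "card L \<le> prod_list (map2 (\<lambda>R B. (B + length R) choose B) Rs Bs)"
    using listset_bound[OF lenB] unfolding L_def by auto
  have finT: "finite T" using LB(1) unfolding T_def by simp
  have cardT: "card T \<le> card L" unfolding T_def by (rule card_image_le[OF LB(1)])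
  have lin_split: "lin x cols c = lin (take r x) Ds c + lin (drop r x) (concat Rs) c"
    if "length x = length cols" for x c
  proof -
    have "zip x cols = zip (take r x) Ds @ zip (drop r x) (concat Rs)"
      using that unfolding cols_def r_def
      by (metis append_take_drop_id length_append length_take min.absorb2 le_add1 zip_append)
    then show ?thesis unfolding lin_def by simp
  qed
  have inj: "inj_on (drop r) S"
  proof (rule inj_onI)
    fix x x' assume x: "x \<in> S" and x': "x' \<in> S" and eq: "drop r x = drop r x'"
    have lx: "length x = length cols" and lx': "length x' = length cols"
      using x x' unfolding S_def Sol_def by auto
    have lt: "length (take r x) = length Ds" "length (take r x') = length Ds"
      using lx lx' unfolding cols_def r_def by auto
    have "lin (take r x) Ds c = lin (take r x') Ds c" for c
    proof -
      have "lin x cols c = lin x' cols c" using x x' unfolding S_def Sol_def by auto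
      then show ?thesis using lin_split[OF lx, of c] lin_split[OF lx', of c] eq by simp
    qed
    then have rel: "(\<Sum>h<length Ds. (int (take r x ! h) - int (take r x' ! h)) * (Ds ! h) c) = 0" for c
      using lin_nth[OF lt(1), of c] lin_nth[OF lt(2), of c]
      by (simp add: left_diff_distrib sum_subtractf)
    have "take r x = take r x'"
    proof (rule nth_equalityI)
      show "length (take r x) = length (take r x')" using lt by simp
      fix i assume "i < length (take r x)"
      then have "i < length Ds" using lt by (simp add: r_def)
      from tri_zero[OF rel piv tri this] show "take r x ! i = take r x' ! i" by simp
    qed
    then show "x = x'" using eq by (metis append_take_drop_id)
  qed
  have sub: "drop r ` S \<subseteq> T"
  proof
    fix y assume "y \<in> drop r ` S"
    then obtain x where x: "x \<in> S" and y: "y = drop r x" by blast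
    have lx: "length x = length cols" using x unfolding S_def Sol_def by auto
    have ly: "length y = sum_list (map length Rs)" using lx y unfolding cols_def r_def
      by (simp add: length_concat)
    obtain ys where ys: "concat ys = y" "map length ys = map length Rs"
      using split_list[OF ly] by blast
    have lys: "length ys = length Rs" using ys(2) by (metis length_map)
    have zx: "zip x cols = zip (take r x) Ds @ concat (map2 zip ys Rs)"
    proof -
      have "zip x cols = zip (take r x) Ds @ zip (drop r x) (concat Rs)"
        using lx unfolding cols_def r_def
        by (metis append_take_drop_id length_append length_take min.absorb2 le_add1 zip_append)
      then show ?thesis using zip_concat[OF ys(2)] ys(1) y by simp
    qed
    have "sum_list (ys ! g) \<le> Bs ! g" if g: "g < length Rs" for g
    proof -
      define F where "F = (\<lambda>(a::nat, v::nat \<Rightarrow> int). int a * (\<Sum>c\<in>Cs ! g. v c))"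
      have Fnn: "0 \<le> F p" if "p \<in> set (zip x cols)" for p
      proof -
        obtain a v where p: "p = (a, v)" by (cases p)
        then have "v \<in> set cols" using that by (auto dest: set_zip_rightD)
        then have "0 \<le> (\<Sum>c\<in>Cs ! g. v c)" using nonneg unfolding cols_def by (simp add: sum_nonneg)
        then show ?thesis unfolding F_def p by simp
      qed
      have lg: "length (ys ! g) = length (Rs ! g)" using ys(2) g lys by (metis nth_map)
      have "int (sum_list (ys ! g)) = sum_list (map (\<lambda>(a, v). int a) (zip (ys ! g) (Rs ! g)))"
      proof -
        have "map (\<lambda>(a, v). int a) (zip (ys ! g) (Rs ! g)) = map int (map fst (zip (ys ! g) (Rs ! g)))"
          by (auto simp: case_prod_unfold)
        also have "\<dots> = map int (ys ! g)" using lg by simp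
        finally show ?thesis by (simp add: sum_list_of_nat)
      qed
      also have "\<dots> \<le> sum_list (map F (zip (ys ! g) (Rs ! g)))"
      proof (rule sum_list_mono)
        fix p assume p: "p \<in> set (zip (ys ! g) (Rs ! g))"
        obtain a v where pe: "p = (a, v)" by (cases p)
        then have "v \<in> set (Rs ! g)" using p by (auto dest: set_zip_rightD)
        then have "1 \<le> (\<Sum>c\<in>Cs ! g. v c)" using grp[OF g] by simp
        then have "int a * 1 \<le> int a * (\<Sum>c\<in>Cs ! g. v c)" by (intro mult_left_mono) auto
        then show "(\<lambda>(a, v). int a) p \<le> F p" unfolding F_def pe by simp
      qed
      also have "\<dots> \<le> sum_list (map (\<lambda>l. sum_list (map F l)) (map2 zip ys Rs))"
      proof (rule member_le_sum_list)
        show "sum_list (map F (zip (ys ! g) (Rs ! g))) \<in> set (map (\<lambda>l. sum_list (map F l)) (map2 zip ys Rs))"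
        proof -
          have "(ys ! g, Rs ! g) \<in> set (zip ys Rs)" using g lys by (metis in_set_zip fst_conv snd_conv)
          then show ?thesis by force
        qed
        fix z assume "z \<in> set (map (\<lambda>l. sum_list (map F l)) (map2 zip ys Rs))"
        then obtain l where l: "l \<in> set (map2 zip ys Rs)" "z = sum_list (map F l)" by auto
        have "set l \<subseteq> set (zip x cols)" using l(1) zx by auto
        then show "0 \<le> z" using l(2) Fnn by (auto intro!: sum_list_nonneg simp del: F_def) (meson subsetD)
      qed
      also have "\<dots> \<le> sum_list (map F (zip x cols))"
      proof -
        have "0 \<le> sum_list (map F (zip (take r x) Ds))"
          using Fnn zx by (auto intro!: sum_list_nonneg)
        then show ?thesis unfolding zx by (simp add: sum_list_map_concat)
      qed
      also have "\<dots> = (\<Sum>c\<in>Cs ! g. lin x cols c)" unfolding F_def lin_functional ..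
      also have "\<dots> = (\<Sum>c\<in>Cs ! g. b c)" using x unfolding S_def Sol_def by simp
      also have "\<dots> \<le> int (Bs ! g)" by (rule bnd[OF g])
      finally show ?thesis by simp
    qed
    then have "ys \<in> L" unfolding L_def listset_iff using lys lenB ys(2)
      by (auto simp: Aset_def) (metis nth_map)
    then show "y \<in> T" unfolding T_def using ys(1) by blast
  qed
  have finS: "finite S" using finite_imageD[OF finite_subset[OF sub finT] inj] .
  have "card S = card (drop r ` S)" using card_image[OF inj] by simp
  also have "\<dots> \<le> card T" by (rule card_mono[OF finT sub])
  finally show ?thesis using cardT LB(2) finS unfolding S_def cols_def by simp
qed

lemma mset_hd_tl:
  assumes "\<forall>G\<in>set Gs. G \<noteq> []"
  shows "mset (concat Gs) = mset (map hd Gs @ concat (map tl Gs))"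
  using assms
proof (induction Gs)
  case Nil then show ?case by simp
next
  case (Cons G Gs)
  then have "G = hd G # tl G" by simp
  then have "mset G = {#hd G#} + mset (tl G)" by (metis mset.simps(2) add_mset_add_single add.commute)
  then show ?case using Cons by (simp add: ac_simps)
qed

lemma groups_bound:
  fixes cols :: "(nat \<Rightarrow> int) list" and Gs :: "(nat \<Rightarrow> int) list list"
    and P :: "nat list" and Cs :: "nat set list" and Bs :: "nat list" and b :: "nat \<Rightarrow> int"
  assumes ms: "mset cols = mset (concat Gs)"
    and lenB: "length Bs = length Gs" and lenC: "length Cs = length Gs"
    and ne: "\<And>G. G \<in> set Gs \<Longrightarrow> G \<noteq> []"
    and nonneg: "\<And>v c. v \<in> set cols \<Longrightarrow> 0 \<le> v c"
    and piv: "\<And>g. g < length Gs \<Longrightarrow> hd (Gs ! g) (P ! g) \<noteq> 0"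
    and tri: "\<And>g h. g < h \<Longrightarrow> h < length Gs \<Longrightarrow> hd (Gs ! h) (P ! g) = 0"
    and finC: "\<And>g. g < length Gs \<Longrightarrow> finite (Cs ! g)"
    and grp: "\<And>g v. g < length Gs \<Longrightarrow> v \<in> set (Gs ! g) \<Longrightarrow> 1 \<le> (\<Sum>c\<in>Cs ! g. v c)"
    and bnd: "\<And>g. g < length Gs \<Longrightarrow> (\<Sum>c\<in>Cs ! g. b c) \<le> int (Bs ! g)"
  shows "vpf cols b \<le> prod_list (map2 (\<lambda>G B. (B + (length G - 1)) choose B) Gs Bs)"
proof -
  define Ds where "Ds = map hd Gs"
  define Rs where "Rs = map tl Gs"
  have ms2: "mset cols = mset (Ds @ concat Rs)"
    using ms mset_hd_tl[of Gs] ne unfolding Ds_def Rs_def by auto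
  have setc: "set (Ds @ concat Rs) = set cols" using ms2 by (metis mset_eq_setD)
  have C: "finite (Sol (Ds @ concat Rs) b) \<and>
         card (Sol (Ds @ concat Rs) b) \<le> prod_list (map2 (\<lambda>R B. (B + length R) choose B) Rs Bs)"
  proof (rule core)
    show "length Bs = length Rs" "length Cs = length Rs" using lenB lenC by (auto simp: Rs_def)
    show "0 \<le> v c" if "v \<in> set (Ds @ concat Rs)" for v c using nonneg that setc by auto
    show "(Ds ! g) (P ! g) \<noteq> 0" if "g < length Ds" for g using piv that by (simp add: Ds_def)
    show "(Ds ! h) (P ! g) = 0" if "g < h" "h < length Ds" for g h using tri that by (simp add: Ds_def)
    show "finite (Cs ! g)" if "g < length Rs" for g using finC that by (simp add: Rs_def)
    show "1 \<le> (\<Sum>c\<in>Cs ! g. v c)" if "g < length Rs" "v \<in> set (Rs ! g)" for g v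
      using grp[of g v] that by (cases "Gs ! g") (auto simp: Rs_def)
    show "(\<Sum>c\<in>Cs ! g. b c) \<le> int (Bs ! g)" if "g < length Rs" for g using bnd that by (simp add: Rs_def)
  qed
  have "vpf cols b = card (Sol cols b)" by (rule vpf_Sol)
  also have "\<dots> \<le> card (Sol (Ds @ concat Rs) b)" using perm_le[OF ms2] C by simp
  also have "\<dots> \<le> prod_list (map2 (\<lambda>R B. (B + length R) choose B) Rs Bs)" using C by simp
  also have "map2 (\<lambda>R B. (B + length R) choose B) Rs Bs = map2 (\<lambda>G B. (B + (length G - 1)) choose B) Gs Bs"
    unfolding Rs_def by (simp add: zip_map1 case_prod_unfold)
  finally show ?thesis .
qed

lemma map2_map_same: "map2 f (map g xs) (map h xs) = map (\<lambda>x. f (g x) (h x)) xs"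
  by (induction xs) auto

lemma groups_bound2:
  fixes cols :: "(nat \<Rightarrow> int) list" and GL :: "((nat \<Rightarrow> int) list \<times> nat \<times> nat set \<times> nat) list"
    and b :: "nat \<Rightarrow> int"
  assumes ms: "mset cols = mset (concat (map fst GL))"
    and nonneg: "\<And>v c. v \<in> set cols \<Longrightarrow> 0 \<le> v c"
    and good: "\<And>G p C B. (G, p, C, B) \<in> set GL \<Longrightarrow> G \<noteq> [] \<and> hd G p \<noteq> 0 \<and> finite C \<and>
                  (\<forall>v\<in>set G. 1 \<le> (\<Sum>c\<in>C. v c)) \<and> (\<Sum>c\<in>C. b c) \<le> int B"
    and srt: "sorted_wrt (\<lambda>(G, p, C, B) (G', p', C', B'). hd G' p = 0) GL"
  shows "vpf cols b \<le> prod_list (map (\<lambda>(G, p, C, B). (B + (length G - 1)) choose B) GL)"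
proof -
  define Gs where "Gs = map fst GL"
  define P where "P = map (\<lambda>q. fst (snd q)) GL"
  define Cs where "Cs = map (\<lambda>q. fst (snd (snd q))) GL"
  define Bs where "Bs = map (\<lambda>q. snd (snd (snd q))) GL"
  have gd: "Gs ! g \<noteq> [] \<and> hd (Gs ! g) (P ! g) \<noteq> 0 \<and> finite (Cs ! g) \<and>
      (\<forall>v\<in>set (Gs ! g). 1 \<le> (\<Sum>c\<in>Cs ! g. v c)) \<and> (\<Sum>c\<in>Cs ! g. b c) \<le> int (Bs ! g)"
    if "g < length GL" for g
  proof -
    define q where "q = GL ! g"
    have "(fst q, fst (snd q), fst (snd (snd q)), snd (snd (snd q))) \<in> set GL"
      using nth_mem[OF that] unfolding q_def by simp
    from good[OF this] show ?thesis using that unfolding q_def Gs_def P_def Cs_def Bs_def by simp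
  qed
  have "vpf cols b \<le> prod_list (map2 (\<lambda>G B. (B + (length G - 1)) choose B) Gs Bs)"
  proof (rule groups_bound[where P=P and Cs=Cs])
    show "mset cols = mset (concat Gs)" using ms by (simp add: Gs_def)
    show "length Bs = length Gs" "length Cs = length Gs" by (auto simp: Bs_def Cs_def Gs_def)
    show "G \<noteq> []" if GG: "G \<in> set Gs" for G
    proof -
      obtain g where g: "g < length Gs" "G = Gs ! g" using GG by (auto simp: in_set_conv_nth)
      have A: "g < length GL" using g(1) by (simp add: Gs_def)
      show ?thesis using gd[OF A] g(2) by simp
    qed
    show "0 \<le> v c" if "v \<in> set cols" for v c using nonneg that .
    show "hd (Gs ! g) (P ! g) \<noteq> 0" if "g < length Gs" for g using gd[of g] that by (simp add: Gs_def)
    show "finite (Cs ! g)" if "g < length Gs" for g using gd[of g] that by (simp add: Gs_def)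
    show "1 \<le> (\<Sum>c\<in>Cs ! g. v c)" if "g < length Gs" "v \<in> set (Gs ! g)" for g v
    proof -
      have A: "g < length GL" using that(1) by (simp add: Gs_def)
      show ?thesis using gd[OF A] that(2) by blast
    qed
    show "(\<Sum>c\<in>Cs ! g. b c) \<le> int (Bs ! g)" if "g < length Gs" for g using gd[of g] that by (simp add: Gs_def)
    show "hd (Gs ! h) (P ! g) = 0" if "g < h" "h < length Gs" for g h
    proof -
      have "(\<lambda>(G, p, C, B) (G', p', C', B'). hd G' p = 0) (GL ! g) (GL ! h)"
      proof -
        have L: "h < length GL" using that(2) by (simp add: Gs_def)
        show ?thesis by (rule sorted_wrt_nth_less[OF srt that(1) L])
      qed
      then show ?thesis using that by (simp add: case_prod_unfold Gs_def P_def)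
    qed
  qed
  also have "map2 (\<lambda>G B. (B + (length G - 1)) choose B) Gs Bs = map (\<lambda>(G, p, C, B). (B + (length G - 1)) choose B) GL"
    unfolding Gs_def Bs_def map2_map_same by (simp add: case_prod_unfold)
  finally show ?thesis .
qed



definition F1 :: "nat \<Rightarrow> nat \<Rightarrow> (nat \<Rightarrow> int) list" where
  "F1 m n = [(\<lambda>c. ey m n j c - ex m n i c). i \<leftarrow> [1..<m], j \<leftarrow> [1..<n]]"
definition F2 :: "nat \<Rightarrow> nat \<Rightarrow> (nat \<Rightarrow> int) list" where
  "F2 m n = [(\<lambda>c. ex m n i c + ey m n j c). i \<leftarrow> [1..<m], j \<leftarrow> [1..<n]]"
definition F3 :: "nat \<Rightarrow> nat \<Rightarrow> (nat \<Rightarrow> int) list" where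
  "F3 m n = concat [replicate (n - 1) (ex m n i). i \<leftarrow> [1..<m]]"
definition F4 :: "nat \<Rightarrow> nat \<Rightarrow> (nat \<Rightarrow> int) list" where
  "F4 m n = concat [replicate (m - 1) (ey m n j). j \<leftarrow> [1..<n]]"
definition F5 :: "nat \<Rightarrow> nat \<Rightarrow> (nat \<Rightarrow> int) list" where
  "F5 m n = [(\<lambda>c. ex m n i c + ey m n j c - ex m n k c).
        i \<leftarrow> [1..<m], k \<leftarrow> [1..<m], i \<noteq> k, j \<leftarrow> [1..<n]]"
definition F6 :: "nat \<Rightarrow> nat \<Rightarrow> (nat \<Rightarrow> int) list" where
  "F6 m n = [(\<lambda>c. ex m n i c + ey m n j c - ey m n k c).
        i \<leftarrow> [1..<m], j \<leftarrow> [1..<n], k \<leftarrow> [1..<n], j \<noteq> k]"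
definition F7 :: "nat \<Rightarrow> nat \<Rightarrow> (nat \<Rightarrow> int) list" where
  "F7 m n = [(\<lambda>c. ex m n k c + ey m n l c - ex m n i c - ey m n j c).
        i \<leftarrow> [1..<m], k \<leftarrow> [1..<m], i < k, j \<leftarrow> [1..<n], l \<leftarrow> [1..<n], j \<noteq> l]"
definition F8 :: "nat \<Rightarrow> nat \<Rightarrow> (nat \<Rightarrow> int) list" where
  "F8 m n = concat [replicate (n - 1) (\<lambda>c. ex m n k c - ex m n i c).
        i \<leftarrow> [1..<m], k \<leftarrow> [1..<m], i < k]"
definition F9 :: "nat \<Rightarrow> nat \<Rightarrow> (nat \<Rightarrow> int) list" where
  "F9 m n = concat [replicate (m - 1) (\<lambda>c. ey m n l c - ey m n j c).
        j \<leftarrow> [1..<n], l \<leftarrow> [1..<n], j < l]"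

definition F7i :: "nat \<Rightarrow> nat \<Rightarrow> nat \<Rightarrow> (nat \<Rightarrow> int) list" where
  "F7i m n i = [(\<lambda>c. ex m n k c + ey m n l c - ex m n i c - ey m n j c).
        k \<leftarrow> [1..<m], i < k, j \<leftarrow> [1..<n], l \<leftarrow> [1..<n], j \<noteq> l]"
definition F9j :: "nat \<Rightarrow> nat \<Rightarrow> nat \<Rightarrow> (nat \<Rightarrow> int) list" where
  "F9j m n j = concat [replicate (m - 1) (\<lambda>c. ey m n l c - ey m n j c). l \<leftarrow> [1..<n], j < l]"

lemma colsA_split: "colsA m n = F1 m n @ F2 m n @ F3 m n @ F4 m n @ F5 m n @ F6 m n @ F7 m n @ F8 m n @ F9 m n"
  unfolding colsA_def F1_def F2_def F3_def F4_def F5_def F6_def F7_def F8_def F9_def by (rule refl)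

lemma F7_split: "F7 m n = concat (map (F7i m n) [1..<m])"
  unfolding F7_def F7i_def by simp

lemma concat_concat_map: "concat (concat (map g xs)) = concat (map (\<lambda>x. concat (g x)) xs)"
  by (induction xs) auto

lemma F9_split: "F9 m n = concat (map (F9j m n) [1..<n])"
  unfolding F9_def F9j_def by (simp add: concat_concat_map)

lemma ex_eq: "i < m \<Longrightarrow> ex m n i c =
   (if c < m then (if 1 \<le> c \<and> c \<le> i then 1 else 0) else if c < m + (n - 2) then int i else 0)"
  by (auto simp: ex_def eT_def)

lemma ey_eq: "1 \<le> j \<Longrightarrow> j < n \<Longrightarrow> ey m n j c =
   (if c < m then 1 else if c < m + (n - 2) then int (m - 1) + (if c < m + (j - 1) then 1 else 0) else 0)"
  by (auto simp: ey_def eT_def)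

lemma ex_nonneg: "0 \<le> ex m n i c" by (auto simp: ex_def eT_def)
lemma ey_nonneg: "0 \<le> ey m n j c" by (auto simp: ey_def eT_def)

lemma cols_nonneg:
  assumes "m \<ge> 1" "v \<in> set (colsA m n)"
  shows "0 \<le> v c"
  using assms unfolding colsA_def
  by (auto simp: ex_eq ey_eq split: if_splits)

lemma ez_nonneg: "0 \<le> ez m n k c"
  by (auto simp: ez_def ex_nonneg ey_nonneg intro: add_nonneg_nonneg)

lemma sum_shift_le:
  fixes m :: nat and f :: "nat \<Rightarrow> nat"
  shows "(\<Sum>i=1..m-1. f (i+1)) \<le> (\<Sum>i=1..m. f i)"
proof (cases m)
  case 0 then show ?thesis by simp
next
  case (Suc m')
  have "(\<Sum>i=1..m-1. f (i+1)) = (\<Sum>i=Suc 1..Suc m'. f i)"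
    using Suc sum.shift_bounds_cl_nat_ivl[of f 1 1 m'] by simp
  also have "\<dots> \<le> (\<Sum>i=1..m. f i)" using Suc by (intro sum_mono2) auto
  finally show ?thesis .
qed

lemma part_sum: "partition_len p N L \<Longrightarrow> (\<Sum>i=1..L-1. p (i+1)) \<le> N"
  unfolding partition_len_def using sum_shift_le[where m=L and f=p] by simp

lemma bvec_le:
  assumes "\<And>i. 1 \<le> i \<Longrightarrow> i \<le> m - 1 \<Longrightarrow> ex m n i c \<le> \<alpha>"
    and "\<And>j. 1 \<le> j \<Longrightarrow> j \<le> n - 1 \<Longrightarrow> ey m n j c \<le> \<beta>"
  shows "bvec m n lam mu nu c \<le> \<alpha> * int (\<Sum>i=1..m-1. mu (i+1)) + \<beta> * int (\<Sum>j=1..n-1. nu (j+1))"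
proof -
  have "0 \<le> (\<Sum>k=1..m*n. int (lam k) * ez m n k c)"
    by (intro sum_nonneg mult_nonneg_nonneg) (auto simp: ez_nonneg)
  moreover have "(\<Sum>i=1..m-1. int (mu (i + 1)) * ex m n i c) \<le> (\<Sum>i=1..m-1. int (mu (i + 1)) * \<alpha>)"
    by (intro sum_mono mult_left_mono) (auto simp: assms(1))
  moreover have "(\<Sum>i=1..m-1. int (mu (i + 1)) * \<alpha>) = \<alpha> * int (\<Sum>i=1..m-1. mu (i+1))"
    by (simp add: sum_distrib_left mult.commute)
  moreover have "(\<Sum>j=1..n-1. int (nu (j + 1)) * ey m n j c) \<le> (\<Sum>j=1..n-1. int (nu (j + 1)) * \<beta>)"
    by (intro sum_mono mult_left_mono) (auto simp: assms(2))
  moreover have "(\<Sum>j=1..n-1. int (nu (j + 1)) * \<beta>) = \<beta> * int (\<Sum>j=1..n-1. nu (j+1))"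
    by (simp add: sum_distrib_left mult.commute)
  ultimately show ?thesis unfolding bvec_def by linarith
qed

lemma bvec_bound:
  assumes m: "m \<ge> 1" and pmu: "partition_len mu N m" and pnu: "partition_len nu N n"
  shows "bvec m n lam mu nu 0 \<le> int N"
    and "1 \<le> c \<Longrightarrow> c < m \<Longrightarrow> bvec m n lam mu nu c \<le> int (2 * N)"
    and "m \<le> c \<Longrightarrow> c < m + (n - 2) \<Longrightarrow> bvec m n lam mu nu c \<le> int ((2 * m - 1) * N)"
proof -
  have SM: "int (\<Sum>i=1..m-1. mu (i+1)) \<le> int N" by (rule of_nat_mono[OF part_sum[OF pmu]])
  have SN: "int (\<Sum>j=1..n-1. nu (j+1)) \<le> int N" by (rule of_nat_mono[OF part_sum[OF pnu]])
  have "bvec m n lam mu nu 0 \<le> 0 * int (\<Sum>i=1..m-1. mu (i+1)) + 1 * int (\<Sum>j=1..n-1. nu (j+1))"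
    by (rule bvec_le) (use m in \<open>auto simp: ex_def ey_def eT_def\<close>)
  then show "bvec m n lam mu nu 0 \<le> int N" using SN by simp
  show "bvec m n lam mu nu c \<le> int (2 * N)" if "1 \<le> c" "c < m"
  proof -
    have "bvec m n lam mu nu c \<le> 1 * int (\<Sum>i=1..m-1. mu (i+1)) + 1 * int (\<Sum>j=1..n-1. nu (j+1))"
      by (rule bvec_le) (use that in \<open>auto simp: ex_def ey_def eT_def\<close>)
    then show ?thesis using SM SN by simp
  qed
  show "bvec m n lam mu nu c \<le> int ((2 * m - 1) * N)" if "m \<le> c" "c < m + (n - 2)"
  proof -
    have "bvec m n lam mu nu c \<le> int (m - 1) * int (\<Sum>i=1..m-1. mu (i+1)) + int m * int (\<Sum>j=1..n-1. nu (j+1))"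
    proof (rule bvec_le)
      show "ex m n i c \<le> int (m - 1)" if "1 \<le> i" "i \<le> m - 1" for i
      proof -
        have "i < m" using that by arith
        then show ?thesis using that \<open>m \<le> c\<close> \<open>c < m + (n - 2)\<close> m by (simp add: ex_eq)
      qed
      show "ey m n j c \<le> int m" if "1 \<le> j" "j \<le> n - 1" for j
        using that \<open>m \<le> c\<close> \<open>c < m + (n - 2)\<close> m by (simp add: ey_eq)
    qed
    also have "\<dots> \<le> int (m - 1) * int N + int m * int N"
      using SM SN by (intro add_mono mult_left_mono) auto
    also have "\<dots> = int ((2 * m - 1) * N)" using m by (simp add: algebra_simps of_nat_diff)
    finally show ?thesis .
  qed
qed

lemma card_ne: "1 \<le> i \<Longrightarrow> i < m \<Longrightarrow> card ({1..<m} \<inter> {k. i \<noteq> k}) = m - 2"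
proof -
  assume a: "1 \<le> i" "i < m"
  have "{1..<m} \<inter> {k. i \<noteq> k} = {1..<m} - {i}" by auto
  then show ?thesis using a by simp
qed

lemma card_gt: "card ({1..<m} \<inter> {k. i < k}) = m - 1 - (i::nat)"
proof -
  have "{1..<m} \<inter> {k. i < k} = {i+1..<m}" by auto
  then show ?thesis by simp
qed

lemma sum_if_const: "finite A \<Longrightarrow> (\<Sum>k\<in>A. if P k then (c::nat) else 0) = card (A \<inter> {k. P k}) * c"
  by (simp add: sum.If_cases)

lemma len_if: "length (if P then xs else []) = (if P then length xs else 0)" by simp

lemma sum_ne: "1 \<le> i \<Longrightarrow> i < m \<Longrightarrow> (\<Sum>k=Suc 0..<m. if i \<noteq> k then (c::nat) else 0) = (m - 2) * c"
  using sum_if_const[of "{Suc 0..<m}" "\<lambda>k. i \<noteq> k" c] card_ne[of i m] by simp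

lemma sum_gt: "(\<Sum>k=Suc 0..<m. if i < k then (c::nat) else 0) = (m - 1 - i) * c"
  using sum_if_const[of "{Suc 0..<m}" "\<lambda>k. i < k" c] card_gt[of m i] by simp

lemma sl_if: "sum_list (map f (if P then xs else [])) = (if P then sum_list (map f xs) else 0)" by simp

lemmas lensimps = len_if sl_if length_concat map_map comp_def interv_sum_list_conv_sum_set_nat sum_list_map_concat


lemma len_F1: "length (F1 m n) = (m - 1) * (n - 1)"
  unfolding F1_def by (simp add: lensimps)
lemma len_F2: "length (F2 m n) = (m - 1) * (n - 1)"
  unfolding F2_def by (simp add: lensimps)
lemma len_F3: "length (F3 m n) = (m - 1) * (n - 1)"
  unfolding F3_def by (simp add: lensimps)
lemma len_F4: "length (F4 m n) = (m - 1) * (n - 1)"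
  unfolding F4_def by (simp add: lensimps)
lemma len_F5: "length (F5 m n) = (m - 1) * (m - 2) * (n - 1)"
  unfolding F5_def by (simp add: lensimps sum_ne cong: sum.cong_simp if_cong)
lemma len_F6: "length (F6 m n) = (m - 1) * (n - 1) * (n - 2)"
  unfolding F6_def by (simp add: lensimps sum_ne cong: sum.cong_simp if_cong)
lemma len_F7i: "length (F7i m n i) = (m - 1 - i) * ((n - 1) * (n - 2))"
  unfolding F7i_def by (simp add: lensimps sum_ne sum_gt cong: sum.cong_simp if_cong)
lemma len_F9j: "length (F9j m n t) = (n - 1 - t) * (m - 1)"
  unfolding F9j_def by (simp add: lensimps sum_gt cong: sum.cong_simp if_cong)
lemma sl_rep: "(\<Sum>k=Suc 0..<m. if i < k then sum_list (map length [replicate c (f k)]) else 0) = (m - 1 - i) * c"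
proof -
  have "(\<Sum>k=Suc 0..<m. if i < k then sum_list (map length [replicate c (f k)]) else 0) =
        (\<Sum>k=Suc 0..<m. if i < k then c else 0)" by (rule sum.cong) auto
  then show ?thesis using sum_gt by simp
qed


lemma len_F8: "length (F8 m n) = (n - 1) * (\<Sum>i\<in>{1..<m}. m - 1 - i)"
  unfolding F8_def
  apply (simp add: lensimps)
  apply (subst sl_rep)
  apply (simp add: sum_distrib_left mult.commute)
  done

lemma gauss_choose: "(\<Sum>i\<in>{1..<m}. m - 1 - i) = (m - 1) choose 2"
proof (induction m)
  case 0 then show ?case by simp
next
  case (Suc m)
  show ?case
  proof (cases m)
    case 0 then show ?thesis by simp
  next
    case (Suc k)
    have "(\<Sum>i\<in>{1..<Suc m}. Suc m - 1 - i) = (\<Sum>i\<in>{1..<m}. m - i) + (m - m)"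
      using Suc by (simp add: atLeastLessThanSuc)
    also have "(\<Sum>i\<in>{1..<m}. m - i) = (\<Sum>i\<in>{1..<m}. (m - 1 - i) + 1)"
      by (rule sum.cong) auto
    also have "\<dots> = ((m - 1) choose 2) + (m - 1)" using Suc.IH by (simp only: sum.distrib) simp
    also have "\<dots> + (m - m) = (Suc m - 1) choose 2" using Suc
      by (simp add: numeral_2_eq_2)
    finally show ?thesis .
  qed
qed

definition grp :: "(nat \<Rightarrow> int) \<Rightarrow> (nat \<Rightarrow> int) list \<Rightarrow> (nat \<Rightarrow> int) list" where
  "grp d L = d # remove1 d L"

lemma grp_hd[simp]: "hd (grp d L) = d" and grp_ne[simp]: "grp d L \<noteq> []"
  by (auto simp: grp_def)

lemma grp_mset: "d \<in> set L \<Longrightarrow> mset (grp d L) = mset L"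
  by (simp add: grp_def)

lemma grp_set: "d \<in> set L \<Longrightarrow> set (grp d L) = set L"
  by (metis grp_mset mset_eq_setD)

lemma grp_len: "d \<in> set L \<Longrightarrow> length (grp d L) = length L"
  by (metis grp_mset size_mset)

lemma mset_concat_grp:
  "(\<And>x. x \<in> set xs \<Longrightarrow> d x \<in> set (L x)) \<Longrightarrow>
    mset (concat (map (\<lambda>x. grp (d x) (L x)) xs)) = mset (concat (map L xs))"
  by (induction xs) (auto simp: grp_mset)

definition d0 :: "nat \<Rightarrow> nat \<Rightarrow> nat \<Rightarrow> int" where "d0 m n = (\<lambda>c. ey m n 1 c - ex m n 1 c)"
definition d7 :: "nat \<Rightarrow> nat \<Rightarrow> nat \<Rightarrow> nat \<Rightarrow> int" where
  "d7 m n i = (\<lambda>c. ex m n (i+1) c + ey m n 2 c - ex m n i c - ey m n 1 c)"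
definition d9 :: "nat \<Rightarrow> nat \<Rightarrow> nat \<Rightarrow> nat \<Rightarrow> int" where
  "d9 m n t = (\<lambda>c. ey m n (t+1) c - ey m n t c)"

lemma d0_mem: "2 \<le> m \<Longrightarrow> 2 \<le> n \<Longrightarrow> d0 m n \<in> set (F1 m n)"
  unfolding F1_def d0_def by force

lemma d1_mem: "2 \<le> m \<Longrightarrow> 2 \<le> n \<Longrightarrow> ex m n 1 \<in> set (F3 m n)"
  unfolding F3_def by force

lemma d7_mem: "1 \<le> i \<Longrightarrow> i + 1 < m \<Longrightarrow> 3 \<le> n \<Longrightarrow> d7 m n i \<in> set (F7i m n i)"
  unfolding F7i_def d7_def by force

lemma d9_mem: "1 \<le> t \<Longrightarrow> t + 1 < n \<Longrightarrow> 2 \<le> m \<Longrightarrow> d9 m n t \<in> set (F9j m n t)"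
  unfolding F9j_def d9_def by force

lemma P0: "1 \<le> m \<Longrightarrow> v \<in> set (F1 m n @ F2 m n @ F4 m n @ F5 m n) \<Longrightarrow> v 0 = 1"
  unfolding F1_def F2_def F4_def F5_def by (auto simp: ex_eq ey_eq)

lemma P1: "2 \<le> m \<Longrightarrow> v \<in> set (F3 m n @ F6 m n) \<Longrightarrow> v 1 = 1"
  unfolding F3_def F6_def by (auto simp: ex_eq ey_eq)


lemma P7: "i + 1 < m \<Longrightarrow> v \<in> set (F7i m n i) \<Longrightarrow> v (i + 1) = 1"
  unfolding F7i_def by (auto simp: ex_eq ey_eq)

lemma P9: "1 \<le> t \<Longrightarrow> t + 2 \<le> n \<Longrightarrow> v \<in> set (F9j m n t) \<Longrightarrow> v (m + t - 1) = 1"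
  unfolding F9j_def by (auto simp: ex_eq ey_eq)

lemma P8: "3 \<le> n \<Longrightarrow> v \<in> set (F8 m n) \<Longrightarrow> 1 \<le> v (m + n - 3)"
  unfolding F8_def by (auto simp: ex_eq ey_eq)

lemma d0_val: "1 \<le> m \<Longrightarrow> 2 \<le> n \<Longrightarrow> d0 m n 0 = 1"
  unfolding d0_def by (auto simp: ex_def ey_def eT_def)

lemma d7_val:
  assumes "1 \<le> i" "i + 1 < m" "3 \<le> n"
  shows "d7 m n i 0 = 0" "d7 m n i 1 = 0" "d7 m n i (i+1) = 1"
    "1 \<le> i' \<Longrightarrow> i' < i \<Longrightarrow> d7 m n i (i'+1) = 0"
    "m \<le> c \<Longrightarrow> 0 \<le> d7 m n i c"
  using assms unfolding d7_def by (auto simp: ex_eq ey_eq)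

lemma d9_val:
  assumes "1 \<le> t" "t + 1 < n" "1 \<le> m"
  shows "c < m \<Longrightarrow> d9 m n t c = 0" "d9 m n t (m + t - 1) = 1"
    "1 \<le> t' \<Longrightarrow> t' < t \<Longrightarrow> d9 m n t (m + t' - 1) = 0"
  using assms unfolding d9_def by (auto simp: ex_eq ey_eq)

definition GL3 :: "nat \<Rightarrow> nat \<Rightarrow> nat \<Rightarrow> ((nat \<Rightarrow> int) list \<times> nat \<times> nat set \<times> nat) list" where
  "GL3 m n N =
    [(grp (d0 m n) (F1 m n @ F2 m n @ F4 m n @ F5 m n), 0, {0}, N),
     (grp (ex m n 1) (F3 m n @ F6 m n), 1, {1}, 2 * N)]
   @ map (\<lambda>i. (grp (d7 m n i) (F7i m n i), i + 1, {i + 1}, 2 * N)) [1..<m-1]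
   @ map (\<lambda>t. (grp (d9 m n t) (F9j m n t), m + t - 1, {m + t - 1}, (2 * m - 1) * N)) [1..<n-2]
   @ [(grp (d9 m n (n-2)) (F9j m n (n-2) @ F8 m n), m + n - 3, {m + n - 3}, (2 * m - 1) * N)]"

lemma F7i_last: "F7i m n (m - Suc 0) = []"
  unfolding F7i_def by auto

lemma F9j_last: "F9j m n (n - Suc 0) = []"
  unfolding F9j_def by auto

lemma upt_m: "2 \<le> m \<Longrightarrow> [1..<m] = [1..<m-1] @ [m-1]"
  by (metis Suc_1 Suc_diff_1 Suc_le_lessD less_imp_le_nat not_less_eq_eq order.strict_trans2 upt_Suc_append zero_less_one)

lemma upt_n: "3 \<le> n \<Longrightarrow> [1..<n] = [1..<n-2] @ [n-2, n-1]"
proof -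
  assume n: "3 \<le> n"
  have e1: "[1..<n] = [1..<n-1] @ [n-1]" using upt_m[of n] n by simp
  have e2: "[1..<n-1] = [1..<n-1-1] @ [n-1-1]" using upt_m[of "n-1"] n by simp
  have e3: "n - 1 - 1 = n - 2" by simp
  show ?thesis unfolding e1 e2 e3 by simp
qed

lemma mset_GL3:
  assumes m: "2 \<le> m" and n: "3 \<le> n"
  shows "mset (colsA m n) = mset (concat (map fst (GL3 m n N)))"
proof -
  have a: "mset (concat (map (\<lambda>i. grp (d7 m n i) (F7i m n i)) [1..<m-1])) = mset (concat (map (F7i m n) [1..<m-1]))"
    by (rule mset_concat_grp) (use m n in \<open>auto intro!: d7_mem\<close>)
  have b: "mset (concat (map (\<lambda>t. grp (d9 m n t) (F9j m n t)) [1..<n-2])) = mset (concat (map (F9j m n) [1..<n-2]))"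
    by (rule mset_concat_grp) (use m n in \<open>auto intro!: d9_mem\<close>)
  have c0: "mset (grp (d0 m n) (F1 m n @ F2 m n @ F4 m n @ F5 m n)) = mset (F1 m n @ F2 m n @ F4 m n @ F5 m n)"
    by (rule grp_mset) (use d0_mem[of m n] m n in auto)
  have c1: "mset (grp (ex m n 1) (F3 m n @ F6 m n)) = mset (F3 m n @ F6 m n)"
    by (rule grp_mset) (use d1_mem[of m n] m n in auto)
  have c2: "mset (grp (d9 m n (n-2)) (F9j m n (n-2) @ F8 m n)) = mset (F9j m n (n-2) @ F8 m n)"
    by (rule grp_mset) (use d9_mem[of "n-2" n m] m n in auto)
  have F7e: "F7 m n = concat (map (F7i m n) [1..<m-1])"
    unfolding F7_split upt_m[OF m] by (simp add: F7i_last)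
  have F9e: "F9 m n = concat (map (F9j m n) [1..<n-2]) @ F9j m n (n-2)"
    unfolding F9_split upt_n[OF n] by (simp add: F9j_last)
  have "concat (map fst (GL3 m n N)) = grp (d0 m n) (F1 m n @ F2 m n @ F4 m n @ F5 m n) @
     grp (ex m n 1) (F3 m n @ F6 m n) @ concat (map (\<lambda>i. grp (d7 m n i) (F7i m n i)) [1..<m-1]) @
     concat (map (\<lambda>t. grp (d9 m n t) (F9j m n t)) [1..<n-2]) @ grp (d9 m n (n-2)) (F9j m n (n-2) @ F8 m n)"
    unfolding GL3_def by (simp add: comp_def)
  then show ?thesis
    unfolding colsA_split F7e F9e using a b c0 c1 c2 by (simp add: ac_simps)
qed

lemma main_ge3:
  assumes m: "2 \<le> m" and n: "3 \<le> n" and pmu: "partition_len mu N m" and pnu: "partition_len nu N n"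
  shows "vpf (colsA m n) (bvec m n lam mu nu) \<le>
           prod_list (map (\<lambda>(G, p, C, B). (B + (length G - 1)) choose B) (GL3 m n N))"
proof (rule groups_bound2[OF mset_GL3[OF m n]])
  show "0 \<le> v c" if "v \<in> set (colsA m n)" for v c using cols_nonneg[OF _ that] m by simp
  let ?b = "bvec m n lam mu nu"
  have m1: "1 \<le> m" using m by simp
  note bb = bvec_bound[OF m1 pmu pnu, where lam=lam]
  show "G \<noteq> [] \<and> hd G p \<noteq> 0 \<and> finite C \<and> (\<forall>v\<in>set G. 1 \<le> (\<Sum>c\<in>C. v c)) \<and> (\<Sum>c\<in>C. ?b c) \<le> int B"
    if q: "(G, p, C, B) \<in> set (GL3 m n N)" for G p C B
  proof -
    consider (A) "(G, p, C, B) = (grp (d0 m n) (F1 m n @ F2 m n @ F4 m n @ F5 m n), 0, {0}, N)"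
      | (B) "(G, p, C, B) = (grp (ex m n 1) (F3 m n @ F6 m n), 1, {1}, 2 * N)"
      | (C) i where "i \<in> {1..<m-1}" "(G, p, C, B) = (grp (d7 m n i) (F7i m n i), i + 1, {i + 1}, 2 * N)"
      | (D) t where "t \<in> {1..<n-2}" "(G, p, C, B) = (grp (d9 m n t) (F9j m n t), m + t - 1, {m + t - 1}, (2 * m - 1) * N)"
      | (E) "(G, p, C, B) = (grp (d9 m n (n-2)) (F9j m n (n-2) @ F8 m n), m + n - 3, {m + n - 3}, (2 * m - 1) * N)"
      using q unfolding GL3_def by auto
    then show ?thesis
    proof cases
      case A
      let ?L = "F1 m n @ F2 m n @ F4 m n @ F5 m n"
      have mem: "d0 m n \<in> set ?L" using d0_mem[of m n] m n by auto
      have "1 \<le> (\<Sum>c\<in>C. v c)" if "v \<in> set G" for v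
      proof -
        have "v \<in> set ?L" using that A grp_set[OF mem] by simp
        then have "v 0 = 1" by (rule P0[OF m1])
        then show ?thesis using A by simp
      qed
      then show ?thesis using A bb(1) d0_val[of m n] m n by auto
    next
      case B
      let ?L = "F3 m n @ F6 m n"
      have mem: "ex m n 1 \<in> set ?L" using d1_mem[of m n] m n by auto
      have v: "ex m n 1 1 = 1" using m by (simp add: ex_eq)
      have "1 \<le> (\<Sum>c\<in>C. v c)" if "v \<in> set G" for v
      proof -
        have "v \<in> set ?L" using that B grp_set[OF mem] by simp
        then have "v 1 = 1" by (rule P1[OF m])
        then show ?thesis using B by simp
      qed
      then show ?thesis using B bb(2)[of 1] v m n by auto
    next
      case (C i)
      have mem: "d7 m n i \<in> set (F7i m n i)" using d7_mem[of i m n] C m n by auto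
      have i: "i + 1 < m" "1 \<le> i" using C by auto
      have "1 \<le> (\<Sum>c\<in>C. v c)" if "v \<in> set G" for v
      proof -
        have "v \<in> set (F7i m n i)" using that C grp_set[OF mem] by simp
        then have "v (i+1) = 1" by (rule P7[OF i(1)])
        then show ?thesis using C by simp
      qed
      then show ?thesis using C bb(2)[of "i+1"] d7_val(3)[of i m n] m n i by auto
    next
      case (D t)
      have mem: "d9 m n t \<in> set (F9j m n t)" using d9_mem[of t n m] D m n by auto
      have t: "1 \<le> t" "t + 2 \<le> n" using D by auto
      have c1: "m \<le> m + t - 1" "m + t - 1 < m + (n - 2)" using t by auto
      have bt: "?b (m + t - 1) \<le> int ((2 * m - 1) * N)" by (rule bb(3)[OF c1])
      have allv: "1 \<le> (\<Sum>c\<in>C. v c)" if "v \<in> set G" for v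
      proof -
        have "v \<in> set (F9j m n t)" using that D grp_set[OF mem] by simp
        then have "v (m + t - 1) = 1" by (rule P9[OF t])
        then show ?thesis using D by simp
      qed
      have t1: "t + 1 < n" using t by simp
      show ?thesis using allv D bt d9_val(2)[OF t(1) t1 m1] m n by auto
    next
      case E
      let ?L = "F9j m n (n-2) @ F8 m n"
      have mem: "d9 m n (n-2) \<in> set ?L" using d9_mem[of "n-2" n m] m n by auto
      have c1: "m \<le> m + n - 3" "m + n - 3 < m + (n - 2)" using n by auto
      have bt: "?b (m + n - 3) \<le> int ((2 * m - 1) * N)" by (rule bb(3)[OF c1])
      have e: "m + (n - 2) - 1 = m + n - 3" using n by simp
      have dv: "d9 m n (n-2) (m + n - 3) = 1" using d9_val(2)[of "n-2" n m] m n e by simp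
      have "1 \<le> (\<Sum>c\<in>C. v c)" if "v \<in> set G" for v
      proof -
        have "v \<in> set (F9j m n (n-2)) \<or> v \<in> set (F8 m n)" using that E grp_set[OF mem] by simp
        then have "1 \<le> v (m + n - 3)"
        proof
          assume "v \<in> set (F9j m n (n-2))"
          moreover have "1 \<le> n - 2" "n - 2 + 2 \<le> n" using n by auto
          ultimately have "v (m + (n - 2) - 1) = 1" using P9 by blast
          then show ?thesis using e by simp
        next
          assume "v \<in> set (F8 m n)"
          then show ?thesis by (rule P8[OF n])
        qed
        then show ?thesis using E by simp
      qed
      then show ?thesis using E bt dv m n by auto
    qed
  qed
  show "sorted_wrt (\<lambda>(G, p, C, B) (G', p', C', B'). hd G' p = 0) (GL3 m n N)"
  proof -
    have A: "ex m n 1 0 = 0" using m by (simp add: ex_def eT_def)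
    have B: "d7 m n i 0 = 0 \<and> d7 m n i 1 = 0" if "i \<in> {1..<m-1}" for i
      using d7_val(1,2)[of i m n] that n by auto
    have C: "d9 m n t c = 0" if "1 \<le> t" "t + 1 < n" "c < m" for t c
      using d9_val(1)[OF that(1,2) m1 that(3)] .
    have D: "sorted_wrt (\<lambda>x y. d7 m n y (Suc x) = 0) [1..<m-1]"
    proof (rule sorted_wrt_mono_rel[OF _ sorted_wrt_upt])
      fix x y assume "x \<in> set [1..<m-1]" "y \<in> set [1..<m-1]" "x < y"
      then show "d7 m n y (Suc x) = 0" using d7_val(4)[of y m n x] n by auto
    qed
    have E: "sorted_wrt (\<lambda>x y. d9 m n y (m + x - 1) = 0) [1..<n-2]"
    proof (rule sorted_wrt_mono_rel[OF _ sorted_wrt_upt])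
      fix x y assume xy: "x \<in> set [1..<n-2]" "y \<in> set [1..<n-2]" "x < y"
      then have "1 \<le> y" "y + 1 < n" "1 \<le> x" by auto
      then show "d9 m n y (m + x - 1) = 0" using d9_val(3)[of y n m x] xy m1 by auto
    qed
    have F: "d9 m n (n-2) (m + x - 1) = 0" if "x \<in> {1..<n-2}" for x
    proof -
      have "1 \<le> n - 2" "n - 2 + 1 < n" using n by auto
      then show ?thesis using d9_val(3)[of "n-2" n m x] that m1 by auto
    qed
    have G: "d9 m n t c = 0" if "t \<in> {1..<n-2} \<or> t = n - 2" "c < m" for t c
      using C[of t c] that n by auto
    show ?thesis unfolding GL3_def
      using A B D E F G m n by (auto simp: sorted_wrt_append sorted_wrt_map)
  qed
qed

lemma two_choose: "2 * (k choose 2) = k * (k - 1)"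
proof -
  have "even (k * (k - 1))" by (cases "even k") auto
  then show ?thesis by (simp add: choose_two)
qed

lemma arith_ge3:
  assumes m: "2 \<le> m" and n: "3 \<le> n"
  shows "prod_list (map (\<lambda>(G, p, C, B). (B + (length G - 1)) choose B) (GL3 m n N)) =
     ((N + ((m^2 - 1) * (n - 1) - 1)) choose N)
   * ((2*N + ((m - 1) * (n - 1)^2 - 1)) choose (2*N))
   * (((2*m - 1)*N + (((m - 1) choose 2) * (n - 1) + (m - 1) - 1)) choose ((2*m - 1)*N))
   * (\<Prod>i=3..m. (2*N + (2 * ((n - 1) choose 2) * (i - 2) - 1)) choose (2*N))
   * (\<Prod>j=1..n-3. ((2*m - 1)*N + ((n - j - 1) * (m - 1) - 1)) choose ((2*m - 1)*N))"
proof -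
  obtain k where k: "m = k + 2" using m by (metis add.commute le_iff_add)
  obtain l where l: "n = l + 3" using n by (metis add.commute le_iff_add)
  have len0: "length (grp (d0 m n) (F1 m n @ F2 m n @ F4 m n @ F5 m n)) = (m^2 - 1) * (n - 1)"
  proof -
    have "d0 m n \<in> set (F1 m n @ F2 m n @ F4 m n @ F5 m n)" using d0_mem[of m n] m n by auto
    then have "length (grp (d0 m n) (F1 m n @ F2 m n @ F4 m n @ F5 m n)) =
       (m - 1) * (n - 1) + (m - 1) * (n - 1) + (m - 1) * (n - 1) + (m - 1) * (m - 2) * (n - 1)"
      by (simp add: grp_len len_F1 len_F2 len_F4 len_F5)
    also have "\<dots> = (m^2 - 1) * (n - 1)" unfolding k l by (simp add: power2_eq_square algebra_simps)
    finally show ?thesis .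
  qed
  have len1: "length (grp (ex m n 1) (F3 m n @ F6 m n)) = (m - 1) * (n - 1)^2"
  proof -
    have "ex m n 1 \<in> set (F3 m n @ F6 m n)" using d1_mem[of m n] m n by auto
    then have "length (grp (ex m n 1) (F3 m n @ F6 m n)) = (m - 1) * (n - 1) + (m - 1) * (n - 1) * (n - 2)"
      by (simp add: grp_len len_F3 len_F6)
    also have "\<dots> = (m - 1) * (n - 1)^2" unfolding k l by (simp add: power2_eq_square algebra_simps)
    finally show ?thesis .
  qed
  have lenL: "length (grp (d9 m n (n-2)) (F9j m n (n-2) @ F8 m n)) = ((m - 1) choose 2) * (n - 1) + (m - 1) - 1 + 1"
  proof -
    have "d9 m n (n-2) \<in> set (F9j m n (n-2) @ F8 m n)" using d9_mem[of "n-2" n m] m n by auto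
    then have "length (grp (d9 m n (n-2)) (F9j m n (n-2) @ F8 m n)) = (n - 1 - (n - 2)) * (m - 1) + (n - 1) * ((m - 1) choose 2)"
      using gauss_choose[of m] by (simp add: grp_len len_F9j len_F8)
    also have "\<dots> = ((m - 1) choose 2) * (n - 1) + (m - 1) - 1 + 1"
    proof -
      have "n - 1 - (n - 2) = 1" using n by simp
      then show ?thesis using m by (simp add: mult.commute)
    qed
    finally show ?thesis .
  qed
  have len7: "length (grp (d7 m n i) (F7i m n i)) = (m - 1 - i) * ((n - 1) * (n - 2))" if "i \<in> {1..<m-1}" for i
  proof -
    have "d7 m n i \<in> set (F7i m n i)" using d7_mem[of i m n] that m n by auto
    then show ?thesis by (simp add: grp_len len_F7i)
  qed
  have len9: "length (grp (d9 m n t) (F9j m n t)) = (n - 1 - t) * (m - 1)" if "t \<in> {1..<n-2}" for t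
  proof -
    have "d9 m n t \<in> set (F9j m n t)" using d9_mem[of t n m] that m n by auto
    then show ?thesis by (simp add: grp_len len_F9j)
  qed
  define g7 where "g7 = (\<lambda>i. (2 * N + (length (grp (d7 m n i) (F7i m n i)) - 1)) choose (2 * N))"
  define g9 where "g9 = (\<lambda>t. ((2 * m - 1) * N + (length (grp (d9 m n t) (F9j m n t)) - 1)) choose ((2 * m - 1) * N))"
  have split: "prod_list (map (\<lambda>(G, p, C, B). (B + (length G - 1)) choose B) (GL3 m n N)) =
    ((N + (length (grp (d0 m n) (F1 m n @ F2 m n @ F4 m n @ F5 m n)) - 1)) choose N)
    * ((2 * N + (length (grp (ex m n 1) (F3 m n @ F6 m n)) - 1)) choose (2 * N))
    * prod_list (map g7 [1..<m-1]) * prod_list (map g9 [1..<n-2])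
    * (((2 * m - 1) * N + (length (grp (d9 m n (n-2)) (F9j m n (n-2) @ F8 m n)) - 1)) choose ((2 * m - 1) * N))"
    unfolding GL3_def g7_def g9_def by (simp add: comp_def)
  have P7: "prod_list (map g7 [1..<m-1]) = (\<Prod>i=3..m. (2*N + (2 * ((n - 1) choose 2) * (i - 2) - 1)) choose (2*N))"
  proof -
    have "prod_list (map g7 [1..<m-1]) = prod g7 {1..<m-1}"
      using prod.distinct_set_conv_list[of "[1..<m-1]" g7] by simp
    also have "\<dots> = (\<Prod>i=3..m. (2*N + (2 * ((n - 1) choose 2) * (i - 2) - 1)) choose (2*N))"
    proof (rule prod.reindex_bij_witness[where i="\<lambda>j. m + 1 - j" and j="\<lambda>i. m + 1 - i"])
      fix a assume a: "a \<in> {1..<m-1}"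
      show "m + 1 - (m + 1 - a) = a" using a by auto
      show "m + 1 - a \<in> {3..m}" using a by auto
      have e1: "2 * ((n - 1) choose 2) = (n - 1) * (n - 2)" using two_choose[of "n-1"] by (simp add: numeral_2_eq_2)
      have e2: "m + 1 - a - 2 = m - 1 - a" by simp
      have eq: "2 * ((n - 1) choose 2) * (m + 1 - a - 2) = (m - 1 - a) * ((n - 1) * (n - 2))"
        unfolding e1 e2 by (simp only: ac_simps)
      show "(2*N + (2 * ((n - 1) choose 2) * (m + 1 - a - 2) - 1)) choose (2*N) = g7 a"
        by (simp only: g7_def len7[OF a] eq)
    next
      fix b assume b: "b \<in> {3..m}"
      show "m + 1 - (m + 1 - b) = b" using b by auto
      show "m + 1 - b \<in> {1..<m-1}" using b by auto
    qed
    finally show ?thesis .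
  qed
  have P9: "prod_list (map g9 [1..<n-2]) = (\<Prod>j=1..n-3. ((2*m - 1)*N + ((n - j - 1) * (m - 1) - 1)) choose ((2*m - 1)*N))"
  proof -
    have "prod_list (map g9 [1..<n-2]) = prod g9 {1..<n-2}"
      using prod.distinct_set_conv_list[of "[1..<n-2]" g9] by simp
    also have "{1..<n-2} = {1..n-3}" using n by auto
    also have "prod g9 {1..n-3} = (\<Prod>j=1..n-3. ((2*m - 1)*N + ((n - j - 1) * (m - 1) - 1)) choose ((2*m - 1)*N))"
    proof (rule prod.cong[OF refl])
      fix j assume j: "j \<in> {1..n-3}"
      then have "j \<in> {1..<n-2}" using n by auto
      then show "g9 j = ((2*m - 1)*N + ((n - j - 1) * (m - 1) - 1)) choose ((2*m - 1)*N)"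
        unfolding g9_def using len9 by simp
    qed
    finally show ?thesis .
  qed
  show ?thesis unfolding split P7 P9 len0 len1 lenL by (simp add: ac_simps)
qed

definition GL2 :: "nat \<Rightarrow> nat \<Rightarrow> ((nat \<Rightarrow> int) list \<times> nat \<times> nat set \<times> nat) list" where
  "GL2 m N =
    [(grp (d0 m 2) (F1 m 2 @ F2 m 2 @ F4 m 2 @ F5 m 2), 0, {0}, N),
     (grp (ex m 2 1) (F3 m 2 @ F8 m 2), 1, {1..<m}, 2 * (m - 1) * N)]"

lemma F_empty2: "F6 m 2 = []" "F7 m 2 = []" "F9 m 2 = []"
  unfolding F6_def F7_def F9_def by (auto simp: numeral_2_eq_2)

lemma sum_ge1:
  fixes v :: "nat \<Rightarrow> int"
  assumes "finite C" "c0 \<in> C" "\<And>c. c \<in> C \<Longrightarrow> 0 \<le> v c" "1 \<le> v c0"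
  shows "1 \<le> (\<Sum>c\<in>C. v c)"
proof -
  have "v c0 \<le> (\<Sum>c\<in>C. v c)" by (rule member_le_sum) (use assms in auto)
  then show ?thesis using assms(4) by simp
qed

lemma P38: "2 \<le> m \<Longrightarrow> n = 2 \<Longrightarrow> v \<in> set (F3 m n @ F8 m n) \<Longrightarrow> \<exists>c\<in>{1..<m}. 1 \<le> v c"
proof -
  assume m: "2 \<le> m" and n: "n = 2" and v: "v \<in> set (F3 m n @ F8 m n)"
  show ?thesis
  proof (cases "v \<in> set (F3 m n)")
    case True
    then have "v 1 = 1" using m unfolding F3_def by (auto simp: ex_eq)
    then show ?thesis using m by force
  next
    case False
    then have "v \<in> set (F8 m n)" using v by simp
    then obtain i k where ik: "1 \<le> i" "i < k" "k < m" "v = (\<lambda>c. ex m n k c - ex m n i c)"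
      unfolding F8_def by auto
    then have vk: "v k = 1" by (simp add: ex_eq)
    have "k \<in> {1..<m}" using ik by simp
    then show ?thesis using vk by (intro bexI[of _ k]) auto
  qed
qed

lemma main_eq2:
  assumes m: "2 \<le> m" and pmu: "partition_len mu N m" and pnu: "partition_len nu N 2"
  shows "vpf (colsA m 2) (bvec m 2 lam mu nu) \<le>
           prod_list (map (\<lambda>(G, p, C, B). (B + (length G - 1)) choose B) (GL2 m N))"
proof (rule groups_bound2)
  let ?L0 = "F1 m 2 @ F2 m 2 @ F4 m 2 @ F5 m 2"
  let ?L1 = "F3 m 2 @ F8 m 2"
  have mem0: "d0 m 2 \<in> set ?L0" using d0_mem[of m 2] m by auto
  have mem1: "ex m 2 1 \<in> set ?L1" using d1_mem[of m 2] m by auto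
  show "mset (colsA m 2) = mset (concat (map fst (GL2 m N)))"
    unfolding GL2_def colsA_split F_empty2 using grp_mset[OF mem0] grp_mset[OF mem1]
    by (simp add: ac_simps)
  show nn: "0 \<le> v c" if "v \<in> set (colsA m 2)" for v c using cols_nonneg[OF _ that] m by simp
  let ?b = "bvec m 2 lam mu nu"
  have m1: "1 \<le> m" using m by simp
  note bb = bvec_bound[OF m1 pmu pnu, where lam=lam]
  show "G \<noteq> [] \<and> hd G p \<noteq> 0 \<and> finite C \<and> (\<forall>v\<in>set G. 1 \<le> (\<Sum>c\<in>C. v c)) \<and> (\<Sum>c\<in>C. ?b c) \<le> int B"
    if q: "(G, p, C, B) \<in> set (GL2 m N)" for G p C B
  proof -
    consider (A) "(G, p, C, B) = (grp (d0 m 2) ?L0, 0, {0}, N)"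
      | (B) "(G, p, C, B) = (grp (ex m 2 1) ?L1, 1, {1..<m}, 2 * (m - 1) * N)"
      using q unfolding GL2_def by auto
    then show ?thesis
    proof cases
      case A
      have "1 \<le> (\<Sum>c\<in>C. v c)" if "v \<in> set G" for v
      proof -
        have "v \<in> set ?L0" using that A grp_set[OF mem0] by simp
        then have "v 0 = 1" by (rule P0[OF m1])
        then show ?thesis using A by simp
      qed
      then show ?thesis using A bb(1) d0_val[of m 2] m by auto
    next
      case B
      have v: "ex m 2 1 1 = 1" using m by (simp add: ex_eq)
      have allv: "1 \<le> (\<Sum>c\<in>C. v c)" if "v \<in> set G" for v
      proof -
        have vL: "v \<in> set ?L1" using that B grp_set[OF mem1] by simp
        then obtain c0 where c0: "c0 \<in> {1..<m}" "1 \<le> v c0" using P38[OF m refl] by blast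
        have vc: "v \<in> set (colsA m 2)" using vL unfolding colsA_split by auto
        show ?thesis using B sum_ge1[of "{1..<m}" c0 v] c0 nn[OF vc] by auto
      qed
      have "(\<Sum>c\<in>{1..<m}. ?b c) \<le> (\<Sum>c\<in>{1..<m}. int (2 * N))"
        by (rule sum_mono) (use bb(2) in auto)
      also have "\<dots> = int (2 * (m - 1) * N)" by simp
      finally show ?thesis using allv B v m by auto
    qed
  qed
  show "sorted_wrt (\<lambda>(G, p, C, B) (G', p', C', B'). hd G' p = 0) (GL2 m N)"
    unfolding GL2_def using m by (simp add: ex_def eT_def)
qed

lemma binom_swap: "(a + c) choose a = (a + c) choose (c::nat)"
  using binomial_symmetric[of a "a + c"] by simp

lemma arith_eq2:
  assumes m: "2 \<le> m"
  shows "prod_list (map (\<lambda>(G, p, C, B). (B + (length G - 1)) choose B) (GL2 m N)) \<le>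
     ((N + ((m^2 - 1) * (2 - 1) - 1)) choose N)
   * ((2*N + ((m - 1) * (2 - 1)^2 - 1)) choose (2*N))
   * (((2*m - 1)*N + (((m - 1) choose 2) * (2 - 1) + (m - 1) - 1)) choose ((2*m - 1)*N))
   * (\<Prod>i=3..m. (2*N + (2 * ((2 - 1) choose 2) * (i - 2) - 1)) choose (2*N))
   * (\<Prod>j=1..2-3. ((2*m - 1)*N + ((2 - j - 1) * (m - 1) - 1)) choose ((2*m - 1)*N))"
proof -
  obtain k where k: "m = k + 2" using m by (metis add.commute le_iff_add)
  have len0: "length (grp (d0 m 2) (F1 m 2 @ F2 m 2 @ F4 m 2 @ F5 m 2)) = (m^2 - 1) * (2 - 1)"
  proof -
    have "d0 m 2 \<in> set (F1 m 2 @ F2 m 2 @ F4 m 2 @ F5 m 2)" using d0_mem[of m 2] m by auto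
    then have "length (grp (d0 m 2) (F1 m 2 @ F2 m 2 @ F4 m 2 @ F5 m 2)) =
       (m - 1) * (2 - 1) + (m - 1) * (2 - 1) + (m - 1) * (2 - 1) + (m - 1) * (m - 2) * (2 - 1)"
      by (simp add: grp_len len_F1 len_F2 len_F4 len_F5)
    also have "\<dots> = (m^2 - 1) * (2 - 1)" unfolding k by (simp add: power2_eq_square algebra_simps)
    finally show ?thesis .
  qed
  have len1: "length (grp (ex m 2 1) (F3 m 2 @ F8 m 2)) = ((m - 1) choose 2) * (2 - 1) + (m - 1) - 1 + 1"
  proof -
    have "ex m 2 1 \<in> set (F3 m 2 @ F8 m 2)" using d1_mem[of m 2] m by auto
    then have "length (grp (ex m 2 1) (F3 m 2 @ F8 m 2)) = (m - 1) * (2 - 1) + (2 - 1) * ((m - 1) choose 2)"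
      using gauss_choose[of m] by (simp add: grp_len len_F3 len_F8)
    also have "\<dots> = ((m - 1) choose 2) * (2 - 1) + (m - 1) - 1 + 1" using m by simp
    finally show ?thesis .
  qed
  define c where "c = ((m - 1) choose 2) * (2 - 1) + (m - 1) - 1"
  have "prod_list (map (\<lambda>(G, p, C, B). (B + (length G - 1)) choose B) (GL2 m N)) =
     ((N + ((m^2 - 1) * (2 - 1) - 1)) choose N) * ((2 * (m - 1) * N + c) choose (2 * (m - 1) * N))"
    unfolding GL2_def c_def using len0 len1 by simp
  also have "(2 * (m - 1) * N + c) choose (2 * (m - 1) * N) \<le> ((2*m - 1)*N + c) choose ((2*m - 1)*N)"
  proof -
    have "2 * (m - 1) * N \<le> (2*m - 1)*N" by (simp add: algebra_simps)
    then have "(2 * (m - 1) * N + c) choose c \<le> ((2*m - 1)*N + c) choose c"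
      by (intro binomial_right_mono) simp
    then show ?thesis by (simp add: binom_swap)
  qed
  then have "((N + ((m^2 - 1) * (2 - 1) - 1)) choose N) * ((2 * (m - 1) * N + c) choose (2 * (m - 1) * N))
      \<le> ((N + ((m^2 - 1) * (2 - 1) - 1)) choose N) * (((2*m - 1)*N + c) choose ((2*m - 1)*N))"
    by (rule mult_left_mono) simp
  also have "\<dots> \<le> ((N + ((m^2 - 1) * (2 - 1) - 1)) choose N)
   * ((2*N + ((m - 1) * (2 - 1)^2 - 1)) choose (2*N))
   * (((2*m - 1)*N + c) choose ((2*m - 1)*N))
   * (\<Prod>i=3..m. (2*N + (2 * ((2 - 1) choose 2) * (i - 2) - 1)) choose (2*N))
   * (\<Prod>j=1..2-3. ((2*m - 1)*N + ((2 - j - 1) * (m - 1) - 1)) choose ((2*m - 1)*N))"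
  proof -
    have p1: "1 \<le> (\<Prod>i=3..m. (2*N + (2 * ((2 - 1) choose 2) * (i - 2) - 1)) choose (2*N))"
      by (rule prod_ge_1) (simp add: Suc_leI)
    have p2: "1 \<le> (\<Prod>j=1..2-3. ((2*m - 1)*N + ((2 - j - 1) * (m - 1) - 1)) choose ((2*m - 1)*N))"
      by (rule prod_ge_1) (simp add: Suc_leI)
    have p3: "1 \<le> (2*N + ((m - 1) * (2 - 1)^2 - 1)) choose (2*N)" by (simp add: Suc_leI)
    define X where "X = ((N + ((m^2 - 1) * (2 - 1) - 1)) choose N) * (((2*m - 1)*N + c) choose ((2*m - 1)*N))"
    have "X * 1 * 1 * 1 \<le> X * ((2*N + ((m - 1) * (2 - 1)^2 - 1)) choose (2*N))
       * (\<Prod>i=3..m. (2*N + (2 * ((2 - 1) choose 2) * (i - 2) - 1)) choose (2*N))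
       * (\<Prod>j=1..2-3. ((2*m - 1)*N + ((2 - j - 1) * (m - 1) - 1)) choose ((2*m - 1)*N))"
      using p1 p2 p3 by (intro mult_mono) auto
    then show ?thesis unfolding X_def by (simp add: ac_simps)
  qed
  finally show ?thesis unfolding c_def .
qed

lemma colsA_triv: "m = 1 \<or> n = 1 \<Longrightarrow> colsA m n = []"
  unfolding colsA_def by auto

lemma vpf_nil: "vpf [] b \<le> 1"
proof -
  have "{x :: nat list. length x = length ([] :: (nat \<Rightarrow> int) list) \<and>
      (\<forall>c. (\<Sum>k<length ([] :: (nat \<Rightarrow> int) list). int (x ! k) * (([] :: (nat \<Rightarrow> int) list) ! k) c) = b c)} \<subseteq> {[]}"
    by auto
  then have "card {x :: nat list. length x = length ([] :: (nat \<Rightarrow> int) list) \<and>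
      (\<forall>c. (\<Sum>k<length ([] :: (nat \<Rightarrow> int) list). int (x ! k) * (([] :: (nat \<Rightarrow> int) list) ! k) c) = b c)} \<le> card {[] :: nat list}"
    by (intro card_mono) auto
  then show ?thesis unfolding vpf_def by simp
qed

lemma rhs_ge1:
  "1 \<le> ((N + ((m^2 - 1) * (n - 1) - 1)) choose N)
   * ((2*N + ((m - 1) * (n - 1)^2 - 1)) choose (2*N))
   * (((2*m - 1)*N + (((m - 1) choose 2) * (n - 1) + (m - 1) - 1)) choose ((2*m - 1)*N))
   * (\<Prod>i=3..m. (2*N + (2 * ((n - 1) choose 2) * (i - 2) - 1)) choose (2*N))
   * (\<Prod>j=1..n-3. ((2*m - 1)*N + ((n - j - 1) * (m - 1) - 1)) choose ((2*m - 1)*N))"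
proof -
  have b: "1 \<le> (a + c) choose a" for a c :: nat by (simp add: Suc_leI)
  have p1: "1 \<le> (\<Prod>i=3..m. (2*N + (2 * ((n - 1) choose 2) * (i - 2) - 1)) choose (2*N))"
    by (rule prod_ge_1) (rule b)
  have p2: "1 \<le> (\<Prod>j=1..n-3. ((2*m - 1)*N + ((n - j - 1) * (m - 1) - 1)) choose ((2*m - 1)*N))"
    by (rule prod_ge_1) (rule b)
  show ?thesis using p1 p2 b[of N] b[of "2*N"] b[of "(2*m - 1)*N"]
    by simp
qed

theorem mainTheorem8:
  fixes m n N :: nat and lam mu nu :: "nat \<Rightarrow> nat"
  assumes "m \<ge> 1" and "n \<ge> 1"
    and "partition_len lam N (m * n)"
    and "partition_len mu N m"
    and "partition_len nu N n"
  shows "gtilde m n lam mu nu \<le>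
     ((N + ((m^2 - 1) * (n - 1) - 1)) choose N)
   * ((2*N + ((m - 1) * (n - 1)^2 - 1)) choose (2*N))
   * (((2*m - 1)*N + (((m - 1) choose 2) * (n - 1) + (m - 1) - 1)) choose ((2*m - 1)*N))
   * (\<Prod>i=3..m. (2*N + (2 * ((n - 1) choose 2) * (i - 2) - 1)) choose (2*N))
   * (\<Prod>j=1..n-3. ((2*m - 1)*N + ((n - j - 1) * (m - 1) - 1)) choose ((2*m - 1)*N))"
proof -
  consider (triv) "m = 1 \<or> n = 1" | (two) "2 \<le> m" "n = 2" | (ge3) "2 \<le> m" "3 \<le> n"
    using assms(1,2) by linarith
  then show ?thesis
  proof cases
    case triv
    have "gtilde m n lam mu nu \<le> 1"
      unfolding gtilde_def colsA_triv[OF triv] by (rule vpf_nil)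
    then show ?thesis using rhs_ge1[of N m n] by linarith
  next
    case two
    have pnu: "partition_len nu N 2" using assms(5) two(2) by simp
    have "gtilde m 2 lam mu nu \<le>
     ((N + ((m^2 - 1) * (2 - 1) - 1)) choose N)
   * ((2*N + ((m - 1) * (2 - 1)^2 - 1)) choose (2*N))
   * (((2*m - 1)*N + (((m - 1) choose 2) * (2 - 1) + (m - 1) - 1)) choose ((2*m - 1)*N))
   * (\<Prod>i=3..m. (2*N + (2 * ((2 - 1) choose 2) * (i - 2) - 1)) choose (2*N))
   * (\<Prod>j=1..2-3. ((2*m - 1)*N + ((2 - j - 1) * (m - 1) - 1)) choose ((2*m - 1)*N))"
      unfolding gtilde_def
      using main_eq2[OF two(1) assms(4) pnu, of lam] arith_eq2[OF two(1), of N] by linarith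
    then show ?thesis using two(2) by (simp only:)
  next
    case ge3
    show ?thesis
      unfolding gtilde_def
      using main_ge3[OF ge3 assms(4,5), of lam] arith_ge3[OF ge3, of N] by linarith
  qed
qed

end
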